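(* Let $P$ be a preorder containing an element which is $\ge$ every element of $P$, and let $k\ge 0$. Define the $k$-fold multisemisimplicial set $A$ by \[ A_{\mathbf n}=\mathrm{Map}_{\mathrm{preorder}}(U(\Delta^{\mathbf n}),P),\qquad \mathbf n=(n_1,\dots,n_k), \] with face maps given by restriction along the coface inclusions. Then (i) $A$ has compatible degeneracies, and (ii) the geometric realization $|A|$ is weakly equivalent to a point.
   Context: $\Delta_{\mathrm{inj}}$ is the category of sets $\{0,\dots,n\}$ and monotone injections; a $k$-fold multisemisimplicial set is a functor $(\Delta_{\mathrm{inj}}^{\mathrm{op}})^{\times k}\to\mathrm{Set}$. For a multi-index $\mathbf n$, $\Delta^{\mathbf n}=\Delta^{n_1}\times\cdots\times\Delta^{n_k}$ with its product cell structure, and $U(\Delta^{\mathbf n})$ is its set of cells, preordered (partially ordered) by inclusion; a preorder is a set with a reflexive transitive relation, and $\mathrm{Map}_{\mathrm{preorder}}$ denotes order-preserving maps. A multisemisimplicial set has compatible degeneracies if it is the underlying multisemisimplicial set of some multisimplicial set. *)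

theory Defs
  imports "HOL-Analysis.Analysis" "HOL-Homology.Simplices"
begin

definition delta_mor :: "nat \<Rightarrow> nat \<Rightarrow> (nat \<Rightarrow> nat) \<Rightarrow> bool" where
  "delta_mor m n \<theta> \<longleftrightarrow> \<theta> \<in> {..m} \<rightarrow>\<^sub>E {..n} \<and> mono_on {..m} \<theta>"

definition delta_inj_mor :: "nat \<Rightarrow> nat \<Rightarrow> (nat \<Rightarrow> nat) \<Rightarrow> bool" where
  "delta_inj_mor m n \<theta> \<longleftrightarrow> delta_mor m n \<theta> \<and> inj_on \<theta> {..m}"

text \<open>Multi-indices are lists of length k; morphisms of the k-fold product categories.\<close>
definition multi_mor :: "nat list \<Rightarrow> nat list \<Rightarrow> (nat \<Rightarrow> nat) list \<Rightarrow> bool" where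
  "multi_mor m n \<theta>s \<longleftrightarrow> length m = length n \<and> length \<theta>s = length n \<and>
     (\<forall>i<length n. delta_mor (m!i) (n!i) (\<theta>s!i))"

definition multi_inj_mor :: "nat list \<Rightarrow> nat list \<Rightarrow> (nat \<Rightarrow> nat) list \<Rightarrow> bool" where
  "multi_inj_mor m n \<theta>s \<longleftrightarrow> length m = length n \<and> length \<theta>s = length n \<and>
     (\<forall>i<length n. delta_inj_mor (m!i) (n!i) (\<theta>s!i))"

definition multi_id :: "nat list \<Rightarrow> (nat \<Rightarrow> nat) list" where
  "multi_id n = map (\<lambda>j. restrict id {..j}) n"

definition multi_comp :: "nat list \<Rightarrow> (nat \<Rightarrow> nat) list \<Rightarrow> (nat \<Rightarrow> nat) list \<Rightarrow> (nat \<Rightarrow> nat) list" where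
  "multi_comp l \<theta>s \<phi>s = map (\<lambda>i. restrict ((\<theta>s!i) \<circ> (\<phi>s!i)) {..l!i}) [0..<length l]"

text \<open>A k-fold multisemisimplicial set is given by sets X n (length n = k) and face
  operators d m n \<theta>s : X n -> X m for \<theta>s : m -> n in Delta_inj^k.
  It has compatible degeneracies if the face operators extend to a functor on
  (Delta^op)^k, i.e. it is the underlying multisemisimplicial set of a multisimplicial set.\<close>
definition has_compatible_degeneracies ::
  "nat \<Rightarrow> (nat list \<Rightarrow> 'x set) \<Rightarrow> (nat list \<Rightarrow> nat list \<Rightarrow> (nat \<Rightarrow> nat) list \<Rightarrow> 'x \<Rightarrow> 'x) \<Rightarrow> bool" where
  "has_compatible_degeneracies k X d \<longleftrightarrow>
    (\<exists>F :: nat list \<Rightarrow> nat list \<Rightarrow> (nat \<Rightarrow> nat) list \<Rightarrow> 'x \<Rightarrow> 'x.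
      (\<forall>m n \<theta>s x. length n = k \<and> multi_mor m n \<theta>s \<and> x \<in> X n \<longrightarrow> F m n \<theta>s x \<in> X m) \<and>
      (\<forall>n x. length n = k \<and> x \<in> X n \<longrightarrow> F n n (multi_id n) x = x) \<and>
      (\<forall>l m n \<theta>s \<phi>s x. length n = k \<and> multi_mor m n \<theta>s \<and> multi_mor l m \<phi>s \<and> x \<in> X n \<longrightarrow>
          F l n (multi_comp l \<theta>s \<phi>s) x = F l m \<phi>s (F m n \<theta>s x)) \<and>
      (\<forall>m n \<theta>s x. length n = k \<and> multi_inj_mor m n \<theta>s \<and> x \<in> X n \<longrightarrow> F m n \<theta>s x = d m n \<theta>s x))"

definition quot_topology :: "'a topology \<Rightarrow> ('a \<times> 'a) set \<Rightarrow> 'a set topology" where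
  "quot_topology X E = topology (\<lambda>U. U \<subseteq> topspace X // E \<and> openin X {x \<in> topspace X. E``{x} \<in> U})"

lemma istopology_quot: "istopology (\<lambda>U. U \<subseteq> topspace X // E \<and> openin X {x \<in> topspace X. E``{x} \<in> U})"
proof -
  have 1: "{x \<in> topspace X. E``{x} \<in> S \<inter> T} = {x \<in> topspace X. E``{x} \<in> S} \<inter> {x \<in> topspace X. E``{x} \<in> T}" for S T
    by auto
  have 2: "{x \<in> topspace X. E``{x} \<in> \<Union>K} = \<Union>((\<lambda>S. {x \<in> topspace X. E``{x} \<in> S}) ` K)" for K
    by auto
  show ?thesis
    unfolding istopology_def
    by (auto simp only: 1 2 intro!: openin_Int openin_Union)
qed

definition prod_simplex :: "nat list \<Rightarrow> (nat \<Rightarrow> (nat \<Rightarrow> real)) topology" where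
  "prod_simplex n = product_topology (\<lambda>i. subtopology (powertop_real UNIV) (standard_simplex (n!i))) {..<length n}"

text \<open>The affine map \<Delta>^m -> \<Delta>^n induced by \<theta> : [m] -> [n].\<close>
definition simplex_push :: "(nat \<Rightarrow> nat) \<Rightarrow> nat \<Rightarrow> (nat \<Rightarrow> real) \<Rightarrow> (nat \<Rightarrow> real)" where
  "simplex_push \<theta> m y = (\<lambda>j. \<Sum>i\<le>m. if \<theta> i = j then y i else 0)"

definition multi_push :: "nat list \<Rightarrow> (nat \<Rightarrow> nat) list \<Rightarrow> (nat \<Rightarrow> (nat \<Rightarrow> real)) \<Rightarrow> (nat \<Rightarrow> (nat \<Rightarrow> real))" where
  "multi_push m \<theta>s y = restrict (\<lambda>i. simplex_push (\<theta>s!i) (m!i) (y i)) {..<length m}"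

definition realization_total ::
  "nat \<Rightarrow> (nat list \<Rightarrow> 'x set) \<Rightarrow> ((nat list \<times> 'x) \<times> (nat \<Rightarrow> (nat \<Rightarrow> real))) topology" where
  "realization_total k X = sum_topology (\<lambda>(n, x). prod_simplex n) {(n, x). length n = k \<and> x \<in> X n}"

definition realization_rel ::
  "nat \<Rightarrow> (nat list \<Rightarrow> 'x set) \<Rightarrow> (nat list \<Rightarrow> nat list \<Rightarrow> (nat \<Rightarrow> nat) list \<Rightarrow> 'x \<Rightarrow> 'x)
     \<Rightarrow> (((nat list \<times> 'x) \<times> (nat \<Rightarrow> (nat \<Rightarrow> real))) \<times> ((nat list \<times> 'x) \<times> (nat \<Rightarrow> (nat \<Rightarrow> real)))) set" where
  "realization_rel k X d =
     {(((m, d m n \<theta>s x), y), ((n, x), multi_push m \<theta>s y)) | m n \<theta>s x y.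
        length n = k \<and> multi_inj_mor m n \<theta>s \<and> x \<in> X n \<and> y \<in> topspace (prod_simplex m)}"

text \<open>|X| = (coproduct over n, x \<in> X_n of \<Delta>^n) / ((d \<theta> x, y) ~ (x, \<theta>_* y)).\<close>
definition geometric_realization ::
  "nat \<Rightarrow> (nat list \<Rightarrow> 'x set) \<Rightarrow> (nat list \<Rightarrow> nat list \<Rightarrow> (nat \<Rightarrow> nat) list \<Rightarrow> 'x \<Rightarrow> 'x)
     \<Rightarrow> ((nat list \<times> 'x) \<times> (nat \<Rightarrow> (nat \<Rightarrow> real))) set topology" where
  "geometric_realization k X d =
     quot_topology (realization_total k X) ((realization_rel k X d \<union> (realization_rel k X d)\<inverse>)\<^sup>*)"

text \<open>Weakly equivalent to a point: nonempty and all homotopy groups (at all base points)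
  vanish, i.e. every map from a sphere is null-homotopic.\<close>
definition weakly_contractible_space :: "'a topology \<Rightarrow> bool" where
  "weakly_contractible_space X \<longleftrightarrow> topspace X \<noteq> {} \<and>
     (\<forall>n f. continuous_map (nsphere n) X f \<longrightarrow> (\<exists>c. homotopic_with (\<lambda>_. True) (nsphere n) X f (\<lambda>_. c)))"

text \<open>Cells of \<Delta>^{n_1} x ... x \<Delta>^{n_k}: tuples of nonempty faces, ordered by inclusion.\<close>
definition cells :: "nat list \<Rightarrow> nat set list set" where
  "cells n = {c. length c = length n \<and> (\<forall>i<length n. c!i \<noteq> {} \<and> c!i \<subseteq> {..n!i})}"

definition cell_le :: "nat set list \<Rightarrow> nat set list \<Rightarrow> bool" where
  "cell_le c c' \<longleftrightarrow> length c = length c' \<and> (\<forall>i<length c. c!i \<subseteq> c'!i)"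

text \<open>A_n = Map_preorder(U(\<Delta>^n), P), with P the preorder on the type 'p.\<close>
definition msA :: "nat list \<Rightarrow> (nat set list \<Rightarrow> 'p::preorder) set" where
  "msA n = {a \<in> cells n \<rightarrow>\<^sub>E UNIV. \<forall>c\<in>cells n. \<forall>c'\<in>cells n. cell_le c c' \<longrightarrow> a c \<le> a c'}"

definition msA_face :: "nat list \<Rightarrow> nat list \<Rightarrow> (nat \<Rightarrow> nat) list \<Rightarrow> (nat set list \<Rightarrow> 'p) \<Rightarrow> (nat set list \<Rightarrow> 'p)" where
  "msA_face m n \<theta>s a = restrict (\<lambda>c. a (map2 (`) \<theta>s c)) (cells m)"

end

theory Submission
  imports Defs
begin


lemma nth_map2: "i < length xs \<Longrightarrow> i < length ys \<Longrightarrow> map2 f xs ys ! i = f (xs!i) (ys!i)"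
  by simp

lemma cells_image:
  assumes "length \<theta>s = length n" "length m = length n"
    and "\<And>i. i < length n \<Longrightarrow> (\<theta>s!i) ` {..m!i} \<subseteq> {..n!i}"
    and "c \<in> cells m"
  shows "map2 (`) \<theta>s c \<in> cells n"
  using assms unfolding cells_def by (auto 0 3 simp: subset_iff)

lemma delta_mor_image: "delta_mor m n \<theta> \<Longrightarrow> \<theta> ` {..m} \<subseteq> {..n}"
  unfolding delta_mor_def by auto

lemma multi_mor_cells: "multi_mor m n \<theta>s \<Longrightarrow> c \<in> cells m \<Longrightarrow> map2 (`) \<theta>s c \<in> cells n"
  unfolding multi_mor_def by (rule cells_image) (auto simp: delta_mor_def PiE_iff)

lemma multi_inj_imp_mor: "multi_inj_mor m n \<theta>s \<Longrightarrow> multi_mor m n \<theta>s"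
  unfolding multi_inj_mor_def multi_mor_def delta_inj_mor_def by auto

lemma cell_le_map2: "cell_le c c' \<Longrightarrow> length \<theta>s = length c \<Longrightarrow> cell_le (map2 (`) \<theta>s c) (map2 (`) \<theta>s c')"
  unfolding cell_le_def by (auto simp: image_mono)

lemma face_in_msA:
  assumes "multi_mor m n \<theta>s" "a \<in> msA n"
  shows "msA_face m n \<theta>s a \<in> msA m"
proof -
  have L: "c \<in> cells m \<Longrightarrow> length c = length \<theta>s" for c
    using assms(1) unfolding multi_mor_def cells_def by auto
  show ?thesis
    using assms(2) unfolding msA_def msA_face_def
    by (auto simp: multi_mor_cells[OF assms(1)] cell_le_map2 L)
qed

lemma face_id:
  assumes "a \<in> msA n"
  shows "msA_face n n (multi_id n) a = a"
proof
  fix c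
  show "msA_face n n (multi_id n) a c = a c"
  proof (cases "c \<in> cells n")
    case True
    have "map2 (`) (multi_id n) c = c"
      using True unfolding cells_def multi_id_def
      by (intro nth_equalityI) (auto simp: image_restrict_eq)
    then show ?thesis using True by (simp add: msA_face_def)
  next
    case False
    then show ?thesis using assms by (simp add: msA_face_def msA_def PiE_def extensional_def)
  qed
qed

lemma face_comp:
  assumes "multi_mor m n \<theta>s" "multi_mor l m \<phi>s"
  shows "msA_face l n (multi_comp l \<theta>s \<phi>s) a = msA_face l m \<phi>s (msA_face m n \<theta>s a)"
proof
  fix c
  show "msA_face l n (multi_comp l \<theta>s \<phi>s) a c = msA_face l m \<phi>s (msA_face m n \<theta>s a) c"
  proof (cases "c \<in> cells l")
    case True
    have c2: "map2 (`) \<phi>s c \<in> cells m" using multi_mor_cells[OF assms(2) True] .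
    have "map2 (`) (multi_comp l \<theta>s \<phi>s) c = map2 (`) \<theta>s (map2 (`) \<phi>s c)"
      using True assms unfolding cells_def multi_comp_def multi_mor_def
      by (intro nth_equalityI) (auto simp: image_comp[symmetric] image_restrict_eq)
    then show ?thesis using True c2 by (simp add: msA_face_def)
  next
    case False
    then show ?thesis by (simp add: msA_face_def)
  qed
qed

lemma part1: "has_compatible_degeneracies k msA msA_face"
  unfolding has_compatible_degeneracies_def
  apply (rule exI[of _ msA_face])
  by (auto intro: face_in_msA face_id face_comp)



definition cone :: "'p \<Rightarrow> nat list \<Rightarrow> (nat set list \<Rightarrow> 'p) \<Rightarrow> (nat set list \<Rightarrow> 'p)" where
  "cone tp n a = restrict (\<lambda>c. if (\<exists>i<length n. Suc (n!i) \<in> c!i) then tp else a c) (cells (map Suc n))"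

definition cpt :: "real \<Rightarrow> nat list \<Rightarrow> (nat \<Rightarrow> nat \<Rightarrow> real) \<Rightarrow> (nat \<Rightarrow> nat \<Rightarrow> real)" where
  "cpt t n y = restrict (\<lambda>i j. if j = Suc (n!i) then t else (1-t) * y i j) {..<length n}"

definition ext :: "(nat \<Rightarrow> nat) \<Rightarrow> nat \<Rightarrow> nat \<Rightarrow> (nat \<Rightarrow> nat)" where
  "ext \<theta> m n = restrict (\<lambda>j. if j = Suc m then Suc n else \<theta> j) {..Suc m}"

definition exts :: "nat list \<Rightarrow> nat list \<Rightarrow> (nat \<Rightarrow> nat) list \<Rightarrow> (nat \<Rightarrow> nat) list" where
  "exts m n \<theta>s = map (\<lambda>i. ext (\<theta>s!i) (m!i) (n!i)) [0..<length n]"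

lemma exts_nth [simp]: "i < length n \<Longrightarrow> exts m n \<theta>s ! i = ext (\<theta>s!i) (m!i) (n!i)"
  by (simp add: exts_def)

lemma exts_length [simp]: "length (exts m n \<theta>s) = length n"
  by (simp add: exts_def)

lemma topspace_prod_simplex:
  "topspace (prod_simplex n) = PiE {..<length n} (\<lambda>i. standard_simplex (n!i))"
  by (simp add: prod_simplex_def)

lemma push_simplex:
  assumes "\<theta> ` {..m} \<subseteq> {..n}" "y \<in> standard_simplex m"
  shows "simplex_push \<theta> m y \<in> standard_simplex n"
proof -
  have y: "\<And>i. 0 \<le> y i" "(\<Sum>i\<le>m. y i) = 1"
    using assms(2) by (auto simp: standard_simplex_def)
  have th: "i \<le> m \<Longrightarrow> \<theta> i \<le> n" for i using assms(1) by auto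
  have a: "0 \<le> simplex_push \<theta> m y j" for j
    unfolding simplex_push_def by (rule sum_nonneg) (simp add: y)
  have b: "simplex_push \<theta> m y j \<le> 1" for j
  proof -
    have "simplex_push \<theta> m y j \<le> (\<Sum>i\<le>m. y i)"
      unfolding simplex_push_def by (rule sum_mono) (simp add: y)
    then show ?thesis using y by simp
  qed
  have c: "simplex_push \<theta> m y j = 0" if "j > n" for j
    unfolding simplex_push_def using th that by (intro sum.neutral) force
  have "(\<Sum>j\<le>n. simplex_push \<theta> m y j) = (\<Sum>i\<le>m. \<Sum>j\<le>n. if \<theta> i = j then y i else 0)"
    unfolding simplex_push_def by (rule sum.swap)
  also have "\<dots> = (\<Sum>i\<le>m. y i)"
    by (rule sum.cong) (auto simp: th)
  finally show ?thesis using a b c y by (auto simp: standard_simplex_def)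
qed

lemma multi_push_top:
  assumes "multi_mor m n \<theta>s" "y \<in> topspace (prod_simplex m)"
  shows "multi_push m \<theta>s y \<in> topspace (prod_simplex n)"
  using assms unfolding topspace_prod_simplex multi_push_def multi_mor_def
  by (auto simp: PiE_iff intro!: push_simplex delta_mor_image)

lemma cpt_top:
  assumes "t \<in> {0..1}" "y \<in> topspace (prod_simplex n)"
  shows "cpt t n y \<in> topspace (prod_simplex (map Suc n))"
proof -
  have "(\<lambda>j. if j = Suc (n!i) then t else (1-t) * y i j) \<in> standard_simplex (Suc (n!i))"
    if "i < length n" for i
  proof -
    have y: "y i \<in> standard_simplex (n!i)" using assms(2) that by (auto simp: topspace_prod_simplex)
    then have y1: "\<And>j. 0 \<le> y i j \<and> y i j \<le> 1" "\<And>j. j > n!i \<Longrightarrow> y i j = 0" "(\<Sum>j\<le>n!i. y i j) = 1"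
      by (auto simp: standard_simplex_def)
    have "(1-t) * y i j \<le> 1" for j
      using assms(1) y1(1)[of j] by (simp add: mult_le_one)
    moreover have "(\<Sum>j\<le>Suc (n!i). if j = Suc (n!i) then t else (1-t) * y i j) = 1"
      using y1(3) by (simp add: sum_distrib_left[symmetric])
    ultimately show ?thesis
      using assms(1) y1 by (auto simp: standard_simplex_def)
  qed
  then show ?thesis
    by (auto simp: topspace_prod_simplex cpt_def PiE_iff)
qed



lemma cells_Suc_notin:
  assumes "c \<in> cells (map Suc n)" "\<not> (\<exists>i<length n. Suc (n!i) \<in> c!i)"
  shows "c \<in> cells n"
  using assms unfolding cells_def
  by (auto simp: subset_iff) (metis atMost_iff le_Suc_eq)

lemma cells_sub_Suc: "c \<in> cells n \<Longrightarrow> c \<in> cells (map Suc n)"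
  unfolding cells_def by (fastforce simp: subset_iff)

lemma cone_msA:
  assumes top: "\<forall>x::'p::preorder. x \<le> tp" and a: "a \<in> msA n"
  shows "cone tp n a \<in> msA (map Suc n)"
proof -
  have "cone tp n a c \<le> cone tp n a c'"
    if "c \<in> cells (map Suc n)" "c' \<in> cells (map Suc n)" "cell_le c c'" for c c'
  proof (cases "\<exists>i<length n. Suc (n!i) \<in> c!i")
    case True
    then obtain i where "i<length n" "Suc (n!i) \<in> c!i" by blast
    moreover have "c!i \<subseteq> c'!i" using that(3) that(1) \<open>i<length n\<close> unfolding cell_le_def cells_def by auto
    ultimately have "\<exists>i<length n. Suc (n!i) \<in> c'!i" by blast
    then show ?thesis using True that by (simp add: cone_def)
  next
    case False
    note F = False
    show ?thesis
    proof (cases "\<exists>i<length n. Suc (n!i) \<in> c'!i")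
      case True
      then show ?thesis using False that top by (simp add: cone_def)
    next
      case False
      then show ?thesis using F that a cells_Suc_notin[of c n] cells_Suc_notin[of c' n]
        by (auto simp: cone_def msA_def)
    qed
  qed
  then show ?thesis unfolding msA_def cone_def by auto
qed

lemma ext_inj:
  assumes "delta_inj_mor m n \<theta>"
  shows "delta_inj_mor (Suc m) (Suc n) (ext \<theta> m n)"
proof -
  have th: "\<And>j. j \<le> m \<Longrightarrow> \<theta> j \<le> n" "mono_on {..m} \<theta>" "inj_on \<theta> {..m}"
    using assms by (auto simp: delta_inj_mor_def delta_mor_def PiE_iff)
  have "mono_on {..Suc m} (ext \<theta> m n)"
  proof (rule mono_onI)
    fix r s assume rs: "r \<in> {..Suc m}" "s \<in> {..Suc m}" "r \<le> s"
    show "ext \<theta> m n r \<le> ext \<theta> m n s"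
    proof (cases "s = Suc m")
      case True then show ?thesis using rs th(1)[of r] by (auto simp: ext_def le_Suc_eq)
    next
      case False
      then have "r \<le> m" "s \<le> m" using rs by auto
      then show ?thesis using rs th(2) False by (auto simp: ext_def mono_on_def)
    qed
  qed
  moreover have "inj_on (ext \<theta> m n) {..Suc m}"
  proof (rule inj_onI)
    fix r s assume rs: "r \<in> {..Suc m}" "s \<in> {..Suc m}" "ext \<theta> m n r = ext \<theta> m n s"
    then show "r = s" using th(1)[of r] th(1)[of s] th(3)
      by (auto simp: ext_def le_Suc_eq inj_on_def split: if_splits)
  qed
  moreover have "ext \<theta> m n \<in> {..Suc m} \<rightarrow>\<^sub>E {..Suc n}"
    using th(1) by (auto simp: ext_def le_Suc_eq)
  ultimately show ?thesis by (simp add: delta_inj_mor_def delta_mor_def)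
qed

lemma exts_inj:
  assumes "multi_inj_mor m n \<theta>s"
  shows "multi_inj_mor (map Suc m) (map Suc n) (exts m n \<theta>s)"
  using assms unfolding multi_inj_mor_def by (auto intro: ext_inj)

lemma ext_image:
  assumes "\<And>j. j \<le> m \<Longrightarrow> \<theta> j \<le> n" "C \<subseteq> {..Suc m}"
  shows "Suc n \<in> ext \<theta> m n ` C \<longleftrightarrow> Suc m \<in> C"
    and "Suc m \<notin> C \<Longrightarrow> ext \<theta> m n ` C = \<theta> ` C"
proof -
  show "Suc n \<in> ext \<theta> m n ` C \<longleftrightarrow> Suc m \<in> C"
  proof
    assume "Suc n \<in> ext \<theta> m n ` C"
    then obtain j where "j \<in> C" "ext \<theta> m n j = Suc n" by auto
    then show "Suc m \<in> C" using assms subsetD[OF assms(2)]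
      by (auto simp: ext_def le_Suc_eq split: if_splits) (metis Suc_n_not_le_n)
  next
    assume "Suc m \<in> C" then show "Suc n \<in> ext \<theta> m n ` C"
      by (auto simp: ext_def image_iff intro!: bexI[of _ "Suc m"])
  qed
  assume "Suc m \<notin> C"
  then show "ext \<theta> m n ` C = \<theta> ` C"
    using assms(2) by (auto simp: ext_def subset_iff intro!: image_cong)
qed

lemma face_cone:
  assumes mor: "multi_mor m n \<theta>s"
  shows "msA_face (map Suc m) (map Suc n) (exts m n \<theta>s) (cone tp n x) = cone tp m (msA_face m n \<theta>s x)"
proof
  fix c
  have L: "length m = length n" "length \<theta>s = length n"
    and th: "\<And>i j. i < length n \<Longrightarrow> j \<le> m!i \<Longrightarrow> (\<theta>s!i) j \<le> n!i"
    using mor by (auto simp: multi_mor_def delta_mor_def PiE_iff)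
  show "msA_face (map Suc m) (map Suc n) (exts m n \<theta>s) (cone tp n x) c = cone tp m (msA_face m n \<theta>s x) c"
  proof (cases "c \<in> cells (map Suc m)")
    case False then show ?thesis by (simp add: msA_face_def cone_def)
  next
    case True
    have cl: "length c = length n" and csub: "\<And>i. i < length n \<Longrightarrow> c!i \<subseteq> {..Suc (m!i)}"
      using True L by (auto simp: cells_def)
    define c' where "c' = map2 (`) (exts m n \<theta>s) c"
    have c'nth: "i < length n \<Longrightarrow> c'!i = ext (\<theta>s!i) (m!i) (n!i) ` (c!i)" for i
      using cl by (simp add: c'_def)
    have c'l: "length c' = length n" using cl by (simp add: c'_def)
    have c'cells: "c' \<in> cells (map Suc n)"
      unfolding c'_def
    proof (rule cells_image)
      show "length (exts m n \<theta>s) = length (map Suc n)" "length (map Suc m) = length (map Suc n)"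
        using L by auto
      show "(exts m n \<theta>s ! i) ` {..map Suc m ! i} \<subseteq> {..map Suc n ! i}" if "i < length (map Suc n)" for i
        using that th L by (auto simp: ext_def le_Suc_eq)
    qed (use True in auto)
    have iff: "(\<exists>i<length n. Suc (n!i) \<in> c'!i) \<longleftrightarrow> (\<exists>i<length m. Suc (m!i) \<in> c!i)"
      using ext_image(1)[OF th csub] c'nth L by auto
    show ?thesis
    proof (cases "\<exists>i<length m. Suc (m!i) \<in> c!i")
      case True
      then show ?thesis using iff c'cells \<open>c \<in> cells (map Suc m)\<close>
        by (simp add: msA_face_def cone_def c'_def[symmetric])
    next
      case False
      have cm: "c \<in> cells m" using cells_Suc_notin[OF \<open>c \<in> cells (map Suc m)\<close> False] .
      have eq: "c' = map2 (`) \<theta>s c"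
        using False L cl by (intro nth_equalityI) (auto simp: c'nth c'l ext_image(2)[OF th csub])
      have nn: "\<not> (\<exists>i<length n. Suc (n!i) \<in> c'!i)" using False iff by blast
      have "msA_face (map Suc m) (map Suc n) (exts m n \<theta>s) (cone tp n x) c = cone tp n x c'"
        using \<open>c \<in> cells (map Suc m)\<close> by (simp add: msA_face_def c'_def)
      also have "\<dots> = x c'" using nn c'cells by (auto simp: cone_def)
      also have "\<dots> = cone tp m (msA_face m n \<theta>s x) c"
        using False \<open>c \<in> cells (map Suc m)\<close> cm by (auto simp: cone_def msA_face_def eq)
      finally show ?thesis .
    qed
  qed
qed

lemma push_cpt:
  assumes mor: "multi_mor m n \<theta>s"
  shows "multi_push (map Suc m) (exts m n \<theta>s) (cpt t m y) = cpt t n (multi_push m \<theta>s y)"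
proof
  fix i
  have L: "length m = length n" "length \<theta>s = length n"
    and th: "\<And>i j. i < length n \<Longrightarrow> j \<le> m!i \<Longrightarrow> (\<theta>s!i) j \<le> n!i"
    using mor by (auto simp: multi_mor_def delta_mor_def PiE_iff)
  show "multi_push (map Suc m) (exts m n \<theta>s) (cpt t m y) i = cpt t n (multi_push m \<theta>s y) i"
  proof (cases "i < length n")
    case False then show ?thesis using L by (simp add: multi_push_def cpt_def)
  next
    case True
    show ?thesis
    proof
      fix j
      have e1: "(\<Sum>l\<le>m!i. if ext (\<theta>s!i) (m!i) (n!i) l = j then (if l = Suc (m!i) then t else (1-t) * y i l) else 0)
          = (\<Sum>l\<le>m!i. (1-t) * (if (\<theta>s!i) l = j then y i l else 0))"
        by (rule sum.cong) (auto simp: ext_def)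
      have e3: "l \<le> m!i \<Longrightarrow> (\<theta>s!i) l \<noteq> Suc (n!i)" for l
        using th[OF True, of l] by auto
      show "multi_push (map Suc m) (exts m n \<theta>s) (cpt t m y) i j = cpt t n (multi_push m \<theta>s y) i j"
      proof (cases "j = Suc (n!i)")
        case True
        then show ?thesis using \<open>i < length n\<close> L e3
          by (simp add: multi_push_def cpt_def simplex_push_def ext_def)
      next
        case False
        then show ?thesis using \<open>i < length n\<close> L
          by (simp add: multi_push_def cpt_def simplex_push_def sum_distrib_left[symmetric] e1)
             (simp add: ext_def)
      qed
    qed
  qed
qed



definition G :: "'p \<Rightarrow> real \<times> ((nat list \<times> (nat set list \<Rightarrow> 'p)) \<times> (nat \<Rightarrow> nat \<Rightarrow> real))
   \<Rightarrow> ((nat list \<times> (nat set list \<Rightarrow> 'p)) \<times> (nat \<Rightarrow> nat \<Rightarrow> real))" where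
  "G tp tp' = (case tp' of (t, ((n, a), y)) \<Rightarrow> ((map Suc n, cone tp n a), cpt t n y))"

lemma G_simp [simp]: "G tp (t, ((n, a), y)) = ((map Suc n, cone tp n a), cpt t n y)"
  by (simp add: G_def)

lemma topspace_T:
  "topspace (realization_total k X) = {((n,x),y). length n = k \<and> x \<in> X n \<and> y \<in> topspace (prod_simplex n)}"
  by (auto simp: realization_total_def)

abbreviation RR where "RR k \<equiv> realization_rel k (msA :: nat list \<Rightarrow> (nat set list \<Rightarrow> 'p::preorder) set) msA_face"

lemma multi_inj_len: "multi_inj_mor m n \<theta>s \<Longrightarrow> length m = length n"
  by (simp add: multi_inj_mor_def)

lemma RR_top:
  assumes "(p, p') \<in> RR k"
  shows "p \<in> topspace (realization_total k msA) \<and> p' \<in> topspace (realization_total k msA)"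
  using assms unfolding realization_rel_def topspace_T
  by (auto simp: multi_inj_len intro!: face_in_msA multi_push_top multi_inj_imp_mor)

lemma RR_G:
  assumes top: "\<forall>x::'p::preorder. x \<le> tp" and t: "t \<in> {0..1}"
    and "(p, p') \<in> RR k"
  shows "(G tp (t, p), G tp (t, p')) \<in> RR k"
proof -
  obtain m n \<theta>s x y where p: "p = ((m, msA_face m n \<theta>s x), y)" "p' = ((n, x), multi_push m \<theta>s y)"
    and h: "length n = k" "multi_inj_mor m n \<theta>s" "x \<in> msA n" "y \<in> topspace (prod_simplex m)"
    using assms(3) unfolding realization_rel_def by blast
  have mor: "multi_mor m n \<theta>s" using h(2) by (rule multi_inj_imp_mor)
  show ?thesis
    unfolding realization_rel_def p G_simp
    apply (rule CollectI)
    apply (rule exI[of _ "map Suc m"], rule exI[of _ "map Suc n"], rule exI[of _ "exts m n \<theta>s"],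
           rule exI[of _ "cone tp n x"], rule exI[of _ "cpt t m y"])
    using h t by (simp add: face_cone[OF mor] push_cpt[OF mor] exts_inj cone_msA[OF top] cpt_top)
qed

lemma id_inj: "multi_inj_mor n (map Suc n) (multi_id n)"
  unfolding multi_inj_mor_def multi_id_def delta_inj_mor_def delta_mor_def
  by (auto simp: mono_on_def inj_on_def)

lemma RR_G0:
  assumes top: "\<forall>x::'p::preorder. x \<le> tp"
    and p: "p \<in> topspace (realization_total k msA)"
  shows "(p, G tp (0, p)) \<in> RR k"
proof -
  obtain n x y where pe: "p = ((n, x), y)" and h: "length n = k" "x \<in> msA n" "y \<in> topspace (prod_simplex n)"
    using p unfolding topspace_T by auto
  have f: "msA_face n (map Suc n) (multi_id n) (cone tp n x) = x"
  proof
    fix c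
    show "msA_face n (map Suc n) (multi_id n) (cone tp n x) c = x c"
    proof (cases "c \<in> cells n")
      case True
      have "map2 (`) (multi_id n) c = c"
        using True unfolding cells_def multi_id_def
        by (intro nth_equalityI) (auto simp: image_restrict_eq)
      moreover have "\<not> (\<exists>i<length n. Suc (n!i) \<in> c!i)"
        using True unfolding cells_def by fastforce
      ultimately show ?thesis using True cells_sub_Suc[OF True] by (auto simp: msA_face_def cone_def)
    next
      case False
      then show ?thesis using h(2) by (simp add: msA_face_def msA_def PiE_def extensional_def)
    qed
  qed
  have y: "y \<in> extensional {..<length n}" "\<And>i. i < length n \<Longrightarrow> y i \<in> standard_simplex (n!i)"
    using h(3) by (auto simp: topspace_prod_simplex PiE_iff)
  have psh: "multi_push n (multi_id n) y = cpt 0 n y"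
  proof
    fix i
    show "multi_push n (multi_id n) y i = cpt 0 n y i"
    proof (cases "i < length n")
      case True
      have ys: "\<And>j. j > n!i \<Longrightarrow> y i j = 0" using y(2)[OF True] by (auto simp: standard_simplex_def)
      show ?thesis
      proof
        fix j
        show "multi_push n (multi_id n) y i j = cpt 0 n y i j"
          using True ys[of j] ys[of "Suc (n!i)"]
          by (auto simp: multi_push_def cpt_def simplex_push_def multi_id_def not_le)
      qed
    next
      case False
      then show ?thesis by (simp add: multi_push_def cpt_def)
    qed
  qed
  show ?thesis
    unfolding realization_rel_def pe G_simp
    apply (rule CollectI)
    apply (rule exI[of _ "n"], rule exI[of _ "map Suc n"], rule exI[of _ "multi_id n"],
           rule exI[of _ "cone tp n x"], rule exI[of _ "y"])
    using h by (simp add: f psh id_inj cone_msA[OF top])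
qed

definition base :: "'p \<Rightarrow> nat \<Rightarrow> ((nat list \<times> (nat set list \<Rightarrow> 'p)) \<times> (nat \<Rightarrow> nat \<Rightarrow> real))" where
  "base tp k = ((replicate k 0, restrict (\<lambda>_. tp) (cells (replicate k 0))),
                restrict (\<lambda>i j. if j = 0 then 1 else 0) {..<k})"

definition cs :: "nat list \<Rightarrow> (nat \<Rightarrow> nat) list" where
  "cs n = map (\<lambda>j. restrict (\<lambda>_. Suc j) {..0}) n"

lemma RR_G1:
  assumes top: "\<forall>x::'p::preorder. x \<le> tp" and k: "k \<ge> 1"
    and p: "p \<in> topspace (realization_total k msA)"
  shows "(base tp k, G tp (1, p)) \<in> RR k"
proof -
  obtain n x y where pe: "p = ((n, x), y)" and h: "length n = k" "x \<in> msA n" "y \<in> topspace (prod_simplex n)"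
    using p unfolding topspace_T by auto
  have inj: "multi_inj_mor (replicate k 0) (map Suc n) (cs n)"
    unfolding multi_inj_mor_def cs_def delta_inj_mor_def delta_mor_def using h(1)
    by (auto simp: mono_on_def inj_on_def)
  have f: "msA_face (replicate k 0) (map Suc n) (cs n) (cone tp n x) = restrict (\<lambda>_. tp) (cells (replicate k 0))"
  proof
    fix c
    show "msA_face (replicate k 0) (map Suc n) (cs n) (cone tp n x) c = restrict (\<lambda>_. tp) (cells (replicate k 0)) c"
    proof (cases "c \<in> cells (replicate k 0)")
      case True
      have c0: "\<And>i. i < k \<Longrightarrow> c!i = {0}" and cl: "length c = k"
        using True unfolding cells_def by auto
      have c': "map2 (`) (cs n) c ! i = {Suc (n!i)}" if "i < k" for i
        using that c0[OF that] cl h(1) by (simp add: cs_def)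
      have "map2 (`) (cs n) c \<in> cells (map Suc n)"
        unfolding cells_def proof (intro CollectI conjI allI impI)
        show "length (map2 (`) (cs n) c) = length (map Suc n)" using cl h(1) by (simp add: cs_def)
        fix i assume "i < length (map Suc n)"
        then show "map2 (`) (cs n) c ! i \<noteq> {}" "map2 (`) (cs n) c ! i \<subseteq> {..map Suc n ! i}"
          using c'[of i] h(1) by auto
      qed
      moreover have "\<exists>i<length n. Suc (n!i) \<in> map2 (`) (cs n) c ! i"
        using c' k h(1) by (intro exI[of _ 0]) auto
      ultimately show ?thesis using True by (simp add: msA_face_def cone_def)
    next
      case False
      then show ?thesis by (simp add: msA_face_def)
    qed
  qed
  have d: "restrict (\<lambda>i j. if j = 0 then 1 else 0) {..<k} \<in> topspace (prod_simplex (replicate k 0))"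
    by (auto simp: topspace_prod_simplex standard_simplex_def)
  have psh: "multi_push (replicate k 0) (cs n) (restrict (\<lambda>i j. if j = 0 then 1 else 0) {..<k}) = cpt 1 n y"
  proof (intro ext)
    fix i j
    show "multi_push (replicate k 0) (cs n) (restrict (\<lambda>i j. if j = 0 then 1 else 0) {..<k}) i j = cpt 1 n y i j"
      using h(1) by (cases "i < k") (simp_all add: multi_push_def cpt_def simplex_push_def cs_def)
  qed
  show ?thesis
    unfolding realization_rel_def pe G_simp base_def
    apply (rule CollectI)
    apply (rule exI[of _ "replicate k 0"], rule exI[of _ "map Suc n"], rule exI[of _ "cs n"],
           rule exI[of _ "cone tp n x"], rule exI[of _ "restrict (\<lambda>i j. if j = 0 then 1 else 0) {..<k}"])
    using h by (simp add: f psh inj d cone_msA[OF top])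
qed



lemma openin_quot:
  "openin (quot_topology X E) U \<longleftrightarrow> U \<subseteq> topspace X // E \<and> openin X {x \<in> topspace X. E``{x} \<in> U}"
  unfolding quot_topology_def using istopology_quot[of X E] by simp

lemma topspace_quot: "topspace (quot_topology X E) = topspace X // E"
proof -
  have "openin (quot_topology X E) (topspace X // E)"
    unfolding openin_quot
  proof
    have "{x \<in> topspace X. E``{x} \<in> topspace X // E} = topspace X"
      by (auto simp: quotient_def)
    then show "openin X {x \<in> topspace X. E``{x} \<in> topspace X // E}" by simp
  qed simp
  then have "topspace X // E \<subseteq> topspace (quot_topology X E)" by (rule openin_subset)
  moreover have "topspace (quot_topology X E) \<subseteq> topspace X // E"
    using openin_topspace[of "quot_topology X E"] unfolding openin_quot by blast
  ultimately show ?thesis by blast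
qed

lemma quotient_map_quot: "quotient_map X (quot_topology X E) (\<lambda>x. E``{x})"
  unfolding quotient_map_def topspace_quot
  by (auto simp: openin_quot quotient_def)

lemma cont_proj_real:
  assumes "i < length n"
  shows "continuous_map (prod_simplex n) euclideanreal (\<lambda>y. y i j)"
proof -
  have "continuous_map (prod_simplex n) (subtopology (powertop_real UNIV) (standard_simplex (n!i))) (\<lambda>y. y i)"
    unfolding prod_simplex_def using assms
    by (metis continuous_map_product_projection lessThan_iff)
  moreover have "continuous_map (subtopology (powertop_real UNIV) (standard_simplex (n!i))) euclideanreal (\<lambda>z. z j)"
    by (rule continuous_map_from_subtopology) (metis continuous_map_product_projection UNIV_I)
  ultimately show ?thesis using continuous_map_compose[unfolded o_def] by blast
qed

lemma cont_cpt:
  "continuous_map (prod_topology (top_of_set {0..1}) (prod_simplex n)) (prod_simplex (map Suc n)) (\<lambda>p. cpt (fst p) n (snd p))"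
proof -
  let ?Z = "prod_topology (top_of_set {0..1::real}) (prod_simplex n)"
  have ct: "continuous_map ?Z euclideanreal fst"
    using continuous_map_compose[OF continuous_map_fst continuous_map_from_subtopology[OF continuous_map_id]]
    by (simp add: o_def)
  have cy: "continuous_map ?Z euclideanreal (\<lambda>p. snd p i j)" if "i < length n" for i j
    using continuous_map_compose[OF continuous_map_snd cont_proj_real[OF that, of j]] by (simp add: o_def)
  have comp: "continuous_map ?Z euclideanreal (\<lambda>p. cpt (fst p) n (snd p) i j)" if "i < length n" for i j
  proof (cases "j = Suc (n!i)")
    case True
    have "continuous_map ?Z euclideanreal fst" by (rule ct)
    then show ?thesis using that True by (simp add: cpt_def)
  next
    case False
    have "continuous_map ?Z euclideanreal (\<lambda>p. (1 - fst p) * snd p i j)"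
      by (intro continuous_map_real_mult continuous_map_diff continuous_map_const[THEN iffD2] ct cy that) simp
    then show ?thesis using that False by (simp add: cpt_def)
  qed
  have ext1: "(\<lambda>p. cpt (fst p) n (snd p)) ` topspace ?Z \<subseteq> extensional {..<length (map Suc n)}"
    by (auto simp: cpt_def)
  have c2: "continuous_map ?Z (subtopology (powertop_real UNIV) (standard_simplex (map Suc n ! i))) (\<lambda>p. cpt (fst p) n (snd p) i)"
    if i: "i \<in> {..<length (map Suc n)}" for i
    unfolding continuous_map_in_subtopology
  proof
    show "continuous_map ?Z (powertop_real UNIV) (\<lambda>p. cpt (fst p) n (snd p) i)"
      unfolding continuous_map_componentwise_UNIV using comp i by simp
    show "(\<lambda>p. cpt (fst p) n (snd p) i) \<in> topspace ?Z \<rightarrow> standard_simplex (map Suc n ! i)"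
      using cpt_top i by (fastforce simp: topspace_prod_simplex PiE_iff)
  qed
  show ?thesis
    unfolding prod_simplex_def[of "map Suc n"] continuous_map_componentwise
    using ext1 c2 by blast
qed



lemma snd_cont:
  assumes "i \<in> I"
  shows "continuous_map (subtopology (sum_topology X I) ({i} \<times> topspace (X i))) (X i) snd"
  unfolding continuous_map_def
proof (intro conjI allI impI)
  have ts: "topspace (subtopology (sum_topology X I) ({i} \<times> topspace (X i))) = {i} \<times> topspace (X i)"
    using assms by auto
  show "snd \<in> topspace (subtopology (sum_topology X I) ({i} \<times> topspace (X i))) \<rightarrow> topspace (X i)"
    unfolding ts by auto
  fix U assume U: "openin (X i) U"
  have "{x \<in> topspace (subtopology (sum_topology X I) ({i} \<times> topspace (X i))). snd x \<in> U}
        = ({i} \<times> topspace (X i)) \<inter> Pair i ` U"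
    unfolding ts using openin_subset[OF U] by auto
  moreover have "openin (sum_topology X I) (Pair i ` U)"
    using open_map_component_injection[OF assms] U unfolding open_map_def by blast
  ultimately show "openin (subtopology (sum_topology X I) ({i} \<times> topspace (X i)))
      {x \<in> topspace (subtopology (sum_topology X I) ({i} \<times> topspace (X i))). snd x \<in> U}"
    by (simp add: openin_subtopology_Int2)
qed

lemma cont_G:
  assumes top: "\<forall>x::'p::preorder. x \<le> tp"
  shows "continuous_map (prod_topology (top_of_set {0..1}) (realization_total k (msA :: nat list \<Rightarrow> (nat set list \<Rightarrow> 'p) set)))
            (realization_total k msA) (G tp)"
proof -
  let ?II = "top_of_set {0..1::real}"
  let ?Idx = "{(n,x). length n = k \<and> x \<in> (msA :: nat list \<Rightarrow> (nat set list \<Rightarrow> 'p) set) n}"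
  let ?X = "\<lambda>(n, x::nat set list \<Rightarrow> 'p). prod_simplex n"
  let ?TT = "realization_total k (msA :: nat list \<Rightarrow> (nat set list \<Rightarrow> 'p) set)"
  have TT: "?TT = sum_topology ?X ?Idx" by (simp add: realization_total_def)
  show ?thesis
  proof (rule pasting_lemma[where I = ?Idx and T = "\<lambda>i. topspace ?II \<times> ({i} \<times> topspace (?X i))" and f = "\<lambda>_. G tp"])
    fix i assume i: "i \<in> ?Idx"
    have "openin ?TT (Pair i ` topspace (?X i))"
      unfolding TT using open_map_component_injection[OF i] unfolding open_map_def by blast
    moreover have "{i} \<times> topspace (?X i) = Pair i ` topspace (?X i)" by auto
    ultimately show "openin (prod_topology ?II ?TT) (topspace ?II \<times> ({i} \<times> topspace (?X i)))"
      by (simp add: openin_prod_Times_iff)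
    obtain n a where ia: "i = (n, a)" "length n = k" "a \<in> msA n" using i by auto
    have sub: "subtopology (prod_topology ?II ?TT) (topspace ?II \<times> ({i} \<times> topspace (?X i)))
        = prod_topology ?II (subtopology ?TT ({i} \<times> topspace (?X i)))"
      by (simp add: subtopology_Times subtopology_subtopology)
    have c1: "continuous_map (prod_topology ?II (subtopology ?TT ({i} \<times> topspace (?X i)))) (prod_topology ?II (prod_simplex n))
               (\<lambda>q. (fst q, snd (snd q)))"
    proof (rule continuous_map_pairedI)
      show "continuous_map (prod_topology ?II (subtopology ?TT ({i} \<times> topspace (?X i)))) ?II fst"
        by (rule continuous_map_fst)
      have "continuous_map (subtopology ?TT ({i} \<times> topspace (?X i))) (prod_simplex n) snd"
        using snd_cont[OF i, of ?X] unfolding TT by (simp add: ia)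
      then show "continuous_map (prod_topology ?II (subtopology ?TT ({i} \<times> topspace (?X i)))) (prod_simplex n) (\<lambda>q. snd (snd q))"
        using continuous_map_compose[OF continuous_map_snd] by (simp add: o_def)
    qed
    have i': "(map Suc n, cone tp n a) \<in> ?Idx" using ia cone_msA[OF top] by auto
    have c2: "continuous_map (prod_topology ?II (prod_simplex n)) ?TT (\<lambda>p. ((map Suc n, cone tp n a), cpt (fst p) n (snd p)))"
    proof -
      have "continuous_map (prod_simplex (map Suc n)) ?TT (Pair (map Suc n, cone tp n a))"
        using continuous_map_component_injection[OF i', of ?X] unfolding TT by simp
      then show ?thesis using continuous_map_compose[OF cont_cpt] by (simp add: o_def)
    qed
    have c3: "continuous_map (prod_topology ?II (subtopology ?TT ({i} \<times> topspace (?X i)))) ?TT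
        (\<lambda>q. ((map Suc n, cone tp n a), cpt (fst q) n (snd (snd q))))"
      using continuous_map_compose[OF c1 c2] by (simp add: o_def)
    show "continuous_map (subtopology (prod_topology ?II ?TT) (topspace ?II \<times> ({i} \<times> topspace (?X i)))) ?TT (G tp)"
      unfolding sub
      by (rule continuous_map_eq[OF c3]) (auto simp: ia)
  next
    fix p assume "p \<in> topspace (prod_topology ?II ?TT)"
    then show "\<exists>j. j \<in> ?Idx \<and> p \<in> topspace ?II \<times> ({j} \<times> topspace (?X j)) \<and> G tp p = G tp p"
      by (auto simp: topspace_T)
  qed auto
qed



lemma equiv_E: "equiv UNIV ((S \<union> S\<inverse>)\<^sup>*)"
  unfolding equiv_def
  by (auto simp: refl_rtrancl trans_rtrancl sym_rtrancl sym_Un_converse)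

lemma E_step:
  assumes top: "\<forall>x::'p::preorder. x \<le> tp" and t: "t \<in> {0..1}"
    and "(p, p') \<in> (RR k \<union> (RR k)\<inverse>)\<^sup>*"
    and "p \<in> topspace (realization_total k (msA :: nat list \<Rightarrow> (nat set list \<Rightarrow> 'p) set))"
  shows "p' \<in> topspace (realization_total k (msA :: nat list \<Rightarrow> (nat set list \<Rightarrow> 'p) set)) \<and>
         (G tp (t, p), G tp (t, p')) \<in> (RR k \<union> (RR k)\<inverse>)\<^sup>*"
  using assms(3,4)
proof (induction rule: rtrancl_induct)
  case base then show ?case by simp
next
  case (step y z)
  then have y: "y \<in> topspace (realization_total k msA)" "(G tp (t, p), G tp (t, y)) \<in> (RR k \<union> (RR k)\<inverse>)\<^sup>*"
    by auto
  from step(2) have "(G tp (t, y), G tp (t, z)) \<in> RR k \<union> (RR k)\<inverse>"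
    using RR_G[OF top t, of y z k] RR_G[OF top t, of z y k] by blast
  moreover have "z \<in> topspace (realization_total k msA)"
    using step(2) RR_top by blast
  ultimately show ?case using y by (meson rtrancl.rtrancl_into_rtrancl)
qed

lemma base_top:
  "base tp k \<in> topspace (realization_total k (msA :: nat list \<Rightarrow> (nat set list \<Rightarrow> 'p::preorder) set))"
  by (auto simp: base_def topspace_T msA_def topspace_prod_simplex standard_simplex_def)

lemma main2:
  assumes top: "\<forall>x::'p::preorder. x \<le> tp" and k: "k \<ge> 1"
  shows "weakly_contractible_space (geometric_realization k (msA :: nat list \<Rightarrow> (nat set list \<Rightarrow> 'p) set) msA_face)"
proof -
  let ?II = "top_of_set {0..1::real}"
  let ?TT = "realization_total k (msA :: nat list \<Rightarrow> (nat set list \<Rightarrow> 'p) set)"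
  let ?E = "(RR k \<union> (RR k)\<inverse>)\<^sup>* :: (((nat list \<times> (nat set list \<Rightarrow> 'p)) \<times> (nat \<Rightarrow> nat \<Rightarrow> real)) \<times> _) set"
  let ?Q = "geometric_realization k (msA :: nat list \<Rightarrow> (nat set list \<Rightarrow> 'p) set) msA_face"
  have Q: "?Q = quot_topology ?TT ?E" by (simp add: geometric_realization_def)
  have qm: "quotient_map ?TT ?Q (\<lambda>p. ?E``{p})" unfolding Q by (rule quotient_map_quot)
  have tQ: "topspace ?Q = topspace ?TT // ?E" unfolding Q by (rule topspace_quot)
  have eqv: "equiv UNIV ?E" by (rule equiv_E)
  define Hq where "Hq = (\<lambda>(t::real, C). ?E``{G tp (t, SOME p. p \<in> C \<inter> topspace ?TT)})"
  have Hq_eq: "Hq (t, ?E``{p}) = ?E``{G tp (t, p)}" if t: "t \<in> {0..1}" and p: "p \<in> topspace ?TT" for t p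
  proof -
    let ?p' = "SOME p'. p' \<in> ?E``{p} \<inter> topspace ?TT"
    have "\<exists>p'. p' \<in> ?E``{p} \<inter> topspace ?TT" using p by (intro exI[of _ p]) simp
    then have "?p' \<in> ?E``{p} \<inter> topspace ?TT" by (rule someI_ex)
    then have "(p, ?p') \<in> ?E" by auto
    then have "(G tp (t, p), G tp (t, ?p')) \<in> ?E" using E_step[OF top t _ p] by blast
    then show ?thesis unfolding Hq_def using equiv_class_eq[OF eqv] by auto
  qed
  have qm2: "quotient_map (prod_topology ?II ?TT) (prod_topology ?II ?Q) (\<lambda>(t,p). (t, ?E``{p}))"
  proof (rule quotient_map_prod_right[OF _ _ qm])
    show "locally_compact_space ?II"
      by (rule compact_imp_locally_compact_space, rule compact_space_subtopology) (simp add: compactin_euclidean_iff)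
    show "Hausdorff_space ?II \<or> regular_space ?II"
      by (simp add: Hausdorff_space_subtopology)
  qed
  have cqG: "continuous_map (prod_topology ?II ?TT) ?Q ((\<lambda>p. ?E``{p}) \<circ> G tp)"
    by (rule continuous_map_compose[OF cont_G[OF top] quotient_imp_continuous_map[OF qm]])
  have "continuous_map (prod_topology ?II ?TT) ?Q (Hq \<circ> (\<lambda>(t,p). (t, ?E``{p})))"
    by (rule continuous_map_eq[OF cqG]) (auto simp: Hq_eq)
  then have cHq: "continuous_map (prod_topology ?II ?Q) ?Q Hq"
    by (rule continuous_compose_quotient_map[OF qm2])
  define c where "c = ?E``{base tp k}"
  have H0: "Hq (0, C) = C" if C: "C \<in> topspace ?Q" for C
  proof -
    obtain p where p: "p \<in> topspace ?TT" "C = ?E``{p}" using C unfolding tQ by (blast elim: quotientE)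
    have "(p, G tp (0, p)) \<in> ?E" using RR_G0[OF top p(1)] by auto
    then show ?thesis using p Hq_eq[of 0 p] equiv_class_eq[OF eqv] by auto
  qed
  have H1: "Hq (1, C) = c" if C: "C \<in> topspace ?Q" for C
  proof -
    obtain p where p: "p \<in> topspace ?TT" "C = ?E``{p}" using C unfolding tQ by (blast elim: quotientE)
    have "(base tp k, G tp (1, p)) \<in> ?E" using RR_G1[OF top k p(1)] by auto
    then show ?thesis using p Hq_eq[of 1 p] equiv_class_eq[OF eqv] unfolding c_def by auto
  qed
  have ne: "topspace ?Q \<noteq> {}"
    using base_top[of tp k] unfolding tQ by (blast intro: quotientI)
  show ?thesis
    unfolding weakly_contractible_space_def
  proof (intro conjI ne allI impI)
    fix n f assume f: "continuous_map (nsphere n) ?Q f"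
    define h where "h = (\<lambda>(t::real, x). if x \<in> topspace (nsphere n) then Hq (t, f x) else if t = 0 then f x else c)"
    have cf: "continuous_map (prod_topology ?II (nsphere n)) (prod_topology ?II ?Q) (\<lambda>p. (fst p, f (snd p)))"
      by (intro continuous_map_pairedI continuous_map_fst)
         (simp add: continuous_map_compose[OF continuous_map_snd f, unfolded o_def])
    have cH: "continuous_map (prod_topology ?II (nsphere n)) ?Q (Hq \<circ> (\<lambda>p. (fst p, f (snd p))))"
      by (rule continuous_map_compose[OF cf cHq])
    have ch: "continuous_map (prod_topology ?II (nsphere n)) ?Q h"
      by (rule continuous_map_eq[OF cH]) (auto simp: h_def)
    have fx: "x \<in> topspace (nsphere n) \<Longrightarrow> f x \<in> topspace ?Q" for x
      using f by (auto simp: continuous_map_def)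
    show "\<exists>c. homotopic_with (\<lambda>_. True) (nsphere n) ?Q f (\<lambda>_. c)"
      unfolding homotopic_with_def
    proof (rule exI[of _ c], rule exI[of _ h], intro conjI allI ballI)
      show "continuous_map (prod_topology ?II (nsphere n)) ?Q h" by (rule ch)
    qed (auto simp: h_def H0 H1 fx)
  qed
qed


theorem lemma10p3:
  fixes top :: "'p::preorder" and k :: nat
  assumes "\<forall>x::'p. x \<le> top"
  shows "has_compatible_degeneracies k (msA :: nat list \<Rightarrow> (nat set list \<Rightarrow> 'p) set) msA_face \<and>
         (k \<ge> 1 \<longrightarrow> weakly_contractible_space
            (geometric_realization k (msA :: nat list \<Rightarrow> (nat set list \<Rightarrow> 'p) set) msA_face))"
  using part1 main2[OF assms] by blast

end
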